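(* Let $K\subseteq\mathbb{R}^n$ be a proper polyhedral cone with representation $(H,V)$, let $\mathbf{e}\in\mathrm{int}(K)$, let $A\in\mathbb{R}^{n\times n}$ be $K$-Metzler, and let $c\in\mathbb{R}$. The following are equivalent: (i) $\mu_{\mathbf{e},K}(A)\le c$; (ii) $A\mathbf{e}\preceq_K c\,\mathbf{e}$; (iii) $HA\mathbf{e}\le cH\mathbf{e}$. If additionally $K$ is pointed and $\mathbf{e}^*\in\mathrm{int}(K^* )$, the following are equivalent: (iv) $\mu^{\mathrm{d}}_{\mathbf{e}^*,K^*}(A)\le c$; (v) $A^{\top}\mathbf{e}^*\preceq_{K^*}c\,\mathbf{e}^*$; (vi) $V^{\top}A^{\top}\mathbf{e}^*\le cV^{\top}\mathbf{e}^*$.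
   Context: A cone is a nonempty closed convex set $K\subseteq\mathbb{R}^n$ with $\lambda K\subseteq K$ for $\lambda\ge0$; proper: $\mathrm{int}(K)\ne\emptyset$; pointed: $K\cap(-K)=\{0\}$. Polyhedral with representation $(H,V)$: $K=\{x:Hx\ge0\}=\{Vy:y\ge0\}$. Preorder $x\preceq_K y\iff y-x\in K$; interval $[x,y]_K=\{z:x\preceq_Kz\preceq_Ky\}$. Dual cone $K^*=\{\phi\in\mathbb{R}^n:\langle\phi,x\rangle\ge0\ \forall x\in K\}$. $A$ is $K$-Metzler if $\langle\phi,Av\rangle\ge0$ whenever $\phi\in K^*$, $v\in K$, $\langle\phi,v\rangle=0$. Gauge seminorm: $\|v\|_{\mathbf{e},K}=\inf\{\lambda\ge0:v\in\lambda[-\mathbf{e},\mathbf{e}]_K\}$; dual gauge norm: $\|v\|^{\mathrm{d}}_{\mathbf{e}^*,K^*}=\max\{|\langle\eta,v\rangle|:\eta\in[-\mathbf{e}^*,\mathbf{e}^*]_{K^*}\}$. For a seminorm $|||\cdot|||$ on $\mathbb{R}^n$ with kernel $\mathrm{Ker}=\{x:|||x|||=0\}$, the induced seminorm of a matrix is $|||M|||=\sup\{|||Mx|||:|||x|||=1,\ x\perp\mathrm{Ker}\}$ and the matrix semi-measure is $\mu(M)=\lim_{h\to0^+}(|||I_n+hM|||-1)/h$. $\mu_{\mathbf{e},K}$ denotes the semi-measure of $\|\cdot\|_{\mathbf{e},K}$ and $\mu^{\mathrm{d}}_{\mathbf{e}^*,K^*}$ the matrix measure of $\|\cdot\|^{\mathrm{d}}_{\mathbf{e}^*,K^*}$.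 *)

theory Defs
  imports "HOL-Analysis.Analysis"
begin

text \<open>Vectors in R^n are \<open>real^'n\<close>; matrices are \<open>real^'cols^'rows\<close>.\<close>

definition cone_le :: "(real^'n) set \<Rightarrow> real^'n \<Rightarrow> real^'n \<Rightarrow> bool" where
  "cone_le K x y \<longleftrightarrow> y - x \<in> K"

definition cone_interval :: "(real^'n) set \<Rightarrow> real^'n \<Rightarrow> real^'n \<Rightarrow> (real^'n) set" where
  "cone_interval K x y = {z. cone_le K x z \<and> cone_le K z y}"

definition dual_cone :: "(real^'n) set \<Rightarrow> (real^'n) set" where
  "dual_cone K = {\<phi>. \<forall>x\<in>K. 0 \<le> \<phi> \<bullet> x}"

definition K_Metzler :: "(real^'n) set \<Rightarrow> real^'n^'n \<Rightarrow> bool" where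
  "K_Metzler K A \<longleftrightarrow>
     (\<forall>\<phi>\<in>dual_cone K. \<forall>v\<in>K. \<phi> \<bullet> v = 0 \<longrightarrow> 0 \<le> \<phi> \<bullet> (A *v v))"

definition gauge :: "(real^'n) set \<Rightarrow> real^'n \<Rightarrow> real^'n \<Rightarrow> real" where
  "gauge K e v = Inf {l. 0 \<le> l \<and> v \<in> (\<lambda>z. l *\<^sub>R z) ` cone_interval K (-e) e}"

text \<open>Dual gauge norm \<open>\<parallel>v\<parallel>^d_{e*,K*}\<close> (here Ks plays the role of K*).\<close>
definition dual_gauge :: "(real^'n) set \<Rightarrow> real^'n \<Rightarrow> real^'n \<Rightarrow> real" where
  "dual_gauge Ks es v = Sup {\<bar>\<eta> \<bullet> v\<bar> | \<eta>. \<eta> \<in> cone_interval Ks (-es) es}"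

definition seminorm_kernel :: "(real^'n \<Rightarrow> real) \<Rightarrow> (real^'n) set" where
  "seminorm_kernel N = {x. N x = 0}"

text \<open>Induced seminorm of a matrix, taken in the extended reals
  (the supremum of the empty set is -\<infinity>; this only matters in the degenerate case Ker = R^n).\<close>
definition induced_seminorm :: "(real^'n \<Rightarrow> real) \<Rightarrow> real^'n^'n \<Rightarrow> ereal" where
  "induced_seminorm N M =
     Sup {ereal (N (M *v x)) | x. N x = 1 \<and> (\<forall>k\<in>seminorm_kernel N. x \<bullet> k = 0)}"

definition semi_measure :: "(real^'n \<Rightarrow> real) \<Rightarrow> real^'n^'n \<Rightarrow> ereal" where
  "semi_measure N M =
     Lim (at_right (0::real)) (\<lambda>h. (induced_seminorm N (mat 1 + h *\<^sub>R M) - 1) / ereal h)"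

end

theory Submission
  imports Defs
begin


lemma interior_orth_zero:
  fixes r u :: "real^'n"
  assumes "u \<in> interior S" "\<forall>x\<in>S. 0 \<le> r \<bullet> x" "r \<bullet> u = 0"
  shows "r = 0"
proof (rule ccontr)
  assume r: "r \<noteq> 0"
  obtain \<epsilon> where e: "\<epsilon> > 0" "ball u \<epsilon> \<subseteq> S" using assms(1) by (meson mem_interior)
  define x where "x = u - ((\<epsilon>/2)/norm r) *\<^sub>R r"
  have "dist u x = \<epsilon>/2" using r e by (simp add: x_def dist_norm)
  hence "x \<in> S" using e by auto
  hence "0 \<le> r \<bullet> x" using assms(2) by auto
  moreover have "r \<bullet> x = - (\<epsilon>/2) * norm r"
    using assms(3) r by (simp add: x_def inner_diff_right power2_norm_eq_inner[symmetric] power2_eq_square)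
  moreover have "(\<epsilon>/2) * norm r > 0" using r e by simp
  ultimately show False by linarith
qed

lemma max_ratio_bound:
  fixes B :: "real^'n^'r"
  assumes "\<forall>i. 0 \<le> (B *v u)$i" "\<forall>i. (B *v u)$i = 0 \<longrightarrow> (B *v z)$i = 0"
  shows "\<bar>(B *v z)$i\<bar> \<le> (MAX j. \<bar>(B *v z)$j\<bar> / (B *v u)$j) * (B *v u)$i"
proof (cases "(B *v u)$i = 0")
  case True thus ?thesis using assms by simp
next
  case False
  hence p: "(B *v u)$i > 0" using assms(1) by (metis order_le_less)
  have "\<bar>(B *v z)$i\<bar> / (B *v u)$i \<le> (MAX j. \<bar>(B *v z)$j\<bar> / (B *v u)$j)"
    by (rule Max_ge) auto
  thus ?thesis using p by (simp add: divide_le_eq)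
qed

lemma max_ratio_nonneg:
  fixes B :: "real^'n^'r"
  assumes "\<forall>i. 0 \<le> (B *v u)$i"
  shows "0 \<le> (MAX j. \<bar>(B *v z)$j\<bar> / (B *v u)$j)"
proof -
  obtain i :: 'r where True by auto
  have "0 \<le> \<bar>(B *v z)$i\<bar> / (B *v u)$i" using assms by simp
  also have "\<dots> \<le> (MAX j. \<bar>(B *v z)$j\<bar> / (B *v u)$j)" by (rule Max_ge) auto
  finally show ?thesis .
qed

lemma pos_aux: "0 < h \<Longrightarrow> h * \<bar>a\<bar> < 1 \<Longrightarrow> 0 < 1 + h * (a::real)"
proof -
  assume h: "0 < h" "h * \<bar>a\<bar> < 1"
  have "h * (- \<bar>a\<bar>) \<le> h * a" by (rule mult_left_mono) (use h in auto)
  thus ?thesis using h by simp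
qed

lemma ratio_eventually:
  fixes B :: "real^'n^'r"
  assumes nonneg: "\<forall>i. 0 \<le> (B *v u)$i"
    and zero: "\<forall>i. (B *v u)$i = 0 \<longrightarrow> (B *v w)$i = 0"
    and R: "\<exists>i. 0 < (B *v u)$i"
  defines "m \<equiv> Max ((\<lambda>i. (B *v w)$i / (B *v u)$i) ` {i. 0 < (B *v u)$i})"
  shows "eventually (\<lambda>h. (MAX i. \<bar>(B *v (u + h *\<^sub>R w))$i\<bar> / (B *v u)$i) = 1 + h * m) (at_right 0)"
    and "m \<le> c \<longleftrightarrow> (\<forall>i. (B *v w)$i \<le> c * (B *v u)$i)"
    and "\<exists>i. 0 < (B *v u)$i \<and> (B *v w)$i / (B *v u)$i = m"
proof -
  let ?a = "\<lambda>i. (B *v w)$i / (B *v u)$i"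
  let ?R = "{i. 0 < (B *v u)$i}"
  have fin: "finite ((\<lambda>i. (B *v w)$i / (B *v u)$i) ` ?R)" by simp
  have ne: "((\<lambda>i. (B *v w)$i / (B *v u)$i) ` ?R) \<noteq> {}" using R by auto
  show ex: "\<exists>i. 0 < (B *v u)$i \<and> (B *v w)$i / (B *v u)$i = m"
    using Max_in[OF fin ne] unfolding m_def by auto
  then obtain i0 where i0: "0 < (B *v u)$i0" "?a i0 = m" by blast
  have le_m: "?a i \<le> m" if "0 < (B *v u)$i" for i
    unfolding m_def using that by (intro Max_ge) auto
  show "m \<le> c \<longleftrightarrow> (\<forall>i. (B *v w)$i \<le> c * (B *v u)$i)"
  proof
    assume mc: "m \<le> c"
    show "\<forall>i. (B *v w)$i \<le> c * (B *v u)$i"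
    proof
      fix i
      show "(B *v w)$i \<le> c * (B *v u)$i"
      proof (cases "(B *v u)$i = 0")
        case True thus ?thesis using zero by simp
      next
        case False
        hence p: "0 < (B *v u)$i" using nonneg by (metis order_le_less)
        hence "?a i \<le> c" using le_m mc by force
        thus ?thesis using p by (simp add: divide_le_eq mult.commute)
      qed
    qed
  next
    assume "\<forall>i. (B *v w)$i \<le> c * (B *v u)$i"
    hence "?a i0 \<le> c" using i0(1) by (simp add: divide_le_eq mult.commute)
    thus "m \<le> c" using i0 by simp
  qed
  define M where "M = (\<Sum>i\<in>UNIV. \<bar>?a i\<bar>)"
  have aM: "\<bar>?a i\<bar> \<le> M" for i
    unfolding M_def by (rule member_le_sum) auto
  have Mnn: "0 \<le> M" using aM[of i0] by linarith
  have "eventually (\<lambda>h. 0 < h \<and> h < 1/(M+1)) (at_right (0::real))"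
    unfolding eventually_at_right_field using Mnn by (intro exI[of _ "1/(M+1)"]) auto
  thus "eventually (\<lambda>h. (MAX i. \<bar>(B *v (u + h *\<^sub>R w))$i\<bar> / (B *v u)$i) = 1 + h * m) (at_right 0)"
  proof (rule eventually_mono)
    fix h :: real assume h: "0 < h \<and> h < 1/(M+1)"
    have hM: "h * \<bar>?a i\<bar> < 1" for i
    proof -
      have "h * \<bar>?a i\<bar> \<le> h * M" by (rule mult_left_mono[OF aM]) (use h in auto)
      also have "\<dots> < 1" using h Mnn by (simp add: field_simps)
      finally show ?thesis .
    qed
    have comp: "(B *v (u + h *\<^sub>R w))$i = (B *v u)$i + h * (B *v w)$i" for i
      by (simp add: matrix_vector_right_distrib matrix_vector_mult_scaleR)
    have term_R: "\<bar>(B *v (u + h *\<^sub>R w))$i\<bar> / (B *v u)$i = 1 + h * ?a i" if p: "0 < (B *v u)$i" for i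
    proof -
      have "(B *v (u + h *\<^sub>R w))$i = (B *v u)$i * (1 + h * ?a i)"
        using p by (simp add: comp field_simps)
      moreover have "1 + h * ?a i > 0" using hM[of i] h by (intro pos_aux) auto
      ultimately show ?thesis using p by (simp add: abs_mult)
    qed
    have term_0: "\<bar>(B *v (u + h *\<^sub>R w))$i\<bar> / (B *v u)$i = 0" if "\<not> 0 < (B *v u)$i" for i
      using that nonneg by (metis division_ring_divide_zero order_le_less)
    have hm: "0 < 1 + h * m" using hM[of i0] i0 h pos_aux by metis
    show "(MAX i. \<bar>(B *v (u + h *\<^sub>R w))$i\<bar> / (B *v u)$i) = 1 + h * m"
    proof (rule Max_eqI)
      show "finite (range (\<lambda>i. \<bar>(B *v (u + h *\<^sub>R w))$i\<bar> / (B *v u)$i))" by simp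
    next
      fix y assume "y \<in> range (\<lambda>i. \<bar>(B *v (u + h *\<^sub>R w))$i\<bar> / (B *v u)$i)"
      then obtain i where y: "y = \<bar>(B *v (u + h *\<^sub>R w))$i\<bar> / (B *v u)$i" by auto
      show "y \<le> 1 + h * m"
      proof (cases "0 < (B *v u)$i")
        case True
        have "h * ?a i \<le> h * m" by (rule mult_left_mono[OF le_m[OF True]]) (use h in auto)
        moreover have "y = 1 + h * ?a i" using y term_R[OF True] by simp
        ultimately show ?thesis by linarith
      next
        case False thus ?thesis using y term_0 hm by simp
      qed
    next
      show "1 + h * m \<in> range (\<lambda>i. \<bar>(B *v (u + h *\<^sub>R w))$i\<bar> / (B *v u)$i)"
        by (rule range_eqI[of _ _ i0]) (use term_R[OF i0(1)] i0(2) in simp)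
    qed
  qed
qed



lemma mv_neg: "A *v (- x) = - (A *v (x::real^'n))"
  by (simp add: matrix_vector_mult_def vec_eq_iff sum_negf)

lemma P_apply: "(mat 1 + h *\<^sub>R A) *v x = x + h *\<^sub>R (A *v (x::real^'n))"
  by (simp add: matrix_vector_mult_add_rdistrib scaleR_matrix_vector_assoc[symmetric])

lemma PT_inner: "((mat 1 + h *\<^sub>R transpose A) *v \<eta>) \<bullet> x = \<eta> \<bullet> ((mat 1 + h *\<^sub>R A) *v (x::real^'n))"
  by (simp add: P_apply inner_add_left inner_add_right dot_lmul_matrix)

lemma row_dual:
  fixes H :: "real^'n^'m"
  assumes "K = {x. \<forall>i. 0 \<le> (H *v x) $ i}"
  shows "H$i \<in> dual_cone K"
  using assms by (simp add: dual_cone_def matrix_vector_mul_component)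

lemma col_in_K:
  fixes V :: "real^'k^'n"
  assumes "K = {V *v y | y. \<forall>j. 0 \<le> y $ j}"
  shows "V *v axis j 1 \<in> K"
  using assms by (auto simp: axis_def)

lemma metz_ker:
  fixes H :: "real^'n^'m"
  assumes HK: "K = {x. \<forall>i. 0 \<le> (H *v x) $ i}" and M: "K_Metzler K A" and y: "H *v y = 0"
  shows "H *v (A *v y) = 0"
proof -
  have yK: "y \<in> K" "-y \<in> K" using HK y by (auto simp: mv_neg)
  have "(H *v (A *v y))$i = 0" for i
  proof -
    have d: "H$i \<in> dual_cone K" by (rule row_dual[OF HK])
    have z: "H$i \<bullet> y = 0" "H$i \<bullet> (-y) = 0" using y
      by (simp_all add: matrix_vector_mul_component[symmetric])
    have "0 \<le> H$i \<bullet> (A *v y)" using M d yK z unfolding K_Metzler_def by blast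
    moreover have "0 \<le> H$i \<bullet> (A *v (-y))" using M d yK z unfolding K_Metzler_def by blast
    ultimately show ?thesis by (simp add: matrix_vector_mul_component mv_neg)
  qed
  thus ?thesis by (simp add: vec_eq_iff)
qed

lemma He_props:
  fixes H :: "real^'n^'m"
  assumes HK: "K = {x. \<forall>i. 0 \<le> (H *v x) $ i}" and e: "e \<in> interior K"
  shows "0 \<le> (H *v e)$i" and "(H *v e)$i = 0 \<Longrightarrow> H$i = 0"
proof -
  have eK: "e \<in> K" using e interior_subset by blast
  thus "0 \<le> (H *v e)$i" using HK by auto
  assume "(H *v e)$i = 0"
  thus "H$i = 0"
    by (intro interior_orth_zero[OF e]) (use HK in \<open>auto simp: matrix_vector_mul_component\<close>)
qed

lemma row_zero_comp: "(H::real^'n^'m)$i = 0 \<Longrightarrow> (H *v x)$i = 0"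
  by (simp add: matrix_vector_mul_component)

lemma pos_eventually:
  fixes H :: "real^'n^'m" and V :: "real^'k^'n"
  assumes HK: "K = {x. \<forall>i. 0 \<le> (H *v x) $ i}" and VK: "K = {V *v y | y. \<forall>j. 0 \<le> y $ j}"
    and M: "K_Metzler K A"
  shows "eventually (\<lambda>h. \<forall>x\<in>K. (mat 1 + h *\<^sub>R A) *v x \<in> K) (at_right 0)"
proof -
  let ?v = "\<lambda>j. V *v axis j (1::real)"
  have ev: "eventually (\<lambda>h. 0 \<le> (H *v ?v j)$i + h * (H *v (A *v ?v j))$i) (at_right 0)" for i j
  proof -
    have vK: "?v j \<in> K" by (rule col_in_K[OF VK])
    have nn: "0 \<le> (H *v ?v j)$i" using vK HK by auto
    show ?thesis
    proof (cases "(H *v ?v j)$i = 0")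
      case True
      have "0 \<le> H$i \<bullet> (A *v ?v j)"
        using M row_dual[OF HK, of i] vK True unfolding K_Metzler_def
        by (simp add: matrix_vector_mul_component)
      hence "0 \<le> (H *v (A *v ?v j))$i" by (simp add: matrix_vector_mul_component)
      moreover have "eventually (\<lambda>h::real. 0 < h) (at_right 0)" by (simp add: eventually_at_right_less)
      ultimately show ?thesis using True by (auto elim: eventually_mono)
    next
      case False
      hence pos: "0 < (H *v ?v j)$i" using nn by simp
      have "((\<lambda>h. (H *v ?v j)$i + h * (H *v (A *v ?v j))$i) \<longlongrightarrow> (H *v ?v j)$i + 0 * (H *v (A *v ?v j))$i) (at_right 0)"
        by (intro tendsto_intros)
      hence "eventually (\<lambda>h. 0 < (H *v ?v j)$i + h * (H *v (A *v ?v j))$i) (at_right 0)"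
        using pos by (intro order_tendstoD(1)) auto
      thus ?thesis by (auto elim: eventually_mono)
    qed
  qed
  have "eventually (\<lambda>h. \<forall>i j. 0 \<le> (H *v ?v j)$i + h * (H *v (A *v ?v j))$i) (at_right 0)"
    by (intro eventually_all_finite ev)
  thus ?thesis
  proof (rule eventually_mono)
    fix h assume hp: "\<forall>i j. 0 \<le> (H *v ?v j)$i + h * (H *v (A *v ?v j))$i"
    let ?P = "mat 1 + h *\<^sub>R A"
    show "\<forall>x\<in>K. ?P *v x \<in> K"
    proof
      fix x assume "x \<in> K"
      then obtain y where x: "x = V *v y" and y: "\<forall>j. 0 \<le> y $ j" using VK by auto
      have "0 \<le> (H *v (?P *v x))$i" for i
      proof -
        have "H *v (?P *v x) = (H ** ?P ** V) *v y" by (simp add: x matrix_vector_mul_assoc matrix_mul_assoc)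
        hence "(H *v (?P *v x))$i = (\<Sum>j\<in>UNIV. (H ** ?P ** V)$i$j * y$j)"
          by (simp add: matrix_vector_mult_def)
        also have "\<dots> = (\<Sum>j\<in>UNIV. (H *v (?P *v ?v j))$i * y$j)"
        proof (rule sum.cong[OF refl])
          fix j
          have "(H ** ?P ** V)$i$j = ((H ** ?P ** V) *v axis j 1)$i"
            by (simp add: matrix_vector_mult_basis column_def)
          also have "\<dots> = (H *v (?P *v ?v j))$i" by (simp add: matrix_vector_mul_assoc matrix_mul_assoc)
          finally show "(H ** ?P ** V)$i$j * y$j = (H *v (?P *v ?v j))$i * y$j" by simp
        qed
        also have "\<dots> \<ge> 0"
        proof (rule sum_nonneg)
          fix j
          have "(H *v (?P *v ?v j))$i = (H *v ?v j)$i + h * (H *v (A *v ?v j))$i"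
            by (simp add: P_apply matrix_vector_right_distrib matrix_vector_mult_scaleR)
          thus "0 \<le> (H *v (?P *v ?v j))$i * y$j" using hp y by simp
        qed
        finally show ?thesis .
      qed
      thus "?P *v x \<in> K" using HK by auto
    qed
  qed
qed



lemma mv_diff: "A *v (x - y) = A *v x - A *v (y::real^'n)"
  by (simp add: matrix_vector_mult_def vec_eq_iff sum_subtractf algebra_simps)

lemma interval_H:
  fixes H :: "real^'n^'m"
  assumes HK: "K = {x. \<forall>i. 0 \<le> (H *v x) $ i}"
  shows "z \<in> cone_interval K (-e) e \<longleftrightarrow> (\<forall>i. \<bar>(H *v z)$i\<bar> \<le> (H *v e)$i)"
proof -
  have "z \<in> cone_interval K (-e) e \<longleftrightarrow> (\<forall>i. 0 \<le> (H *v z)$i + (H *v e)$i) \<and> (\<forall>i. 0 \<le> (H *v e)$i - (H *v z)$i)"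
    using HK by (simp add: cone_interval_def cone_le_def matrix_vector_right_distrib mv_diff)
  also have "\<dots> \<longleftrightarrow> (\<forall>i. \<bar>(H *v z)$i\<bar> \<le> (H *v e)$i)" by (auto simp: abs_le_iff) (smt (verit))+
  finally show ?thesis .
qed

lemma gauge_formula:
  fixes H :: "real^'n^'m"
  assumes HK: "K = {x. \<forall>i. 0 \<le> (H *v x) $ i}" and e: "e \<in> interior K"
  shows "gauge K e v = (MAX i. \<bar>(H *v v)$i\<bar> / (H *v e)$i)"
proof -
  define G where "G = (MAX i. \<bar>(H *v v)$i\<bar> / (H *v e)$i)"
  have nn: "\<forall>i. 0 \<le> (H *v e)$i" using He_props[OF HK e] by blast
  have zr: "\<forall>i. (H *v e)$i = 0 \<longrightarrow> (H *v v)$i = 0" using He_props[OF HK e] row_zero_comp by blast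
  have G0: "0 \<le> G" unfolding G_def by (rule max_ratio_nonneg[OF nn])
  define S where "S = {l. 0 \<le> l \<and> v \<in> (\<lambda>z. l *\<^sub>R z) ` cone_interval K (-e) e}"
  have key: "l \<in> S \<longleftrightarrow> G \<le> l" if l: "0 < l" for l
  proof -
    have "l \<in> S \<longleftrightarrow> (1/l) *\<^sub>R v \<in> cone_interval K (-e) e"
    proof
      assume "l \<in> S"
      then obtain z where "v = l *\<^sub>R z" "z \<in> cone_interval K (-e) e" unfolding S_def by auto
      thus "(1/l) *\<^sub>R v \<in> cone_interval K (-e) e" using l by simp
    next
      assume m: "(1/l) *\<^sub>R v \<in> cone_interval K (-e) e"
      have "v = l *\<^sub>R ((1/l) *\<^sub>R v)" using l by simp
      hence "v \<in> (\<lambda>z. l *\<^sub>R z) ` cone_interval K (-e) e" using m by (rule image_eqI)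
      thus "l \<in> S" unfolding S_def using l by simp
    qed
    also have "\<dots> \<longleftrightarrow> (\<forall>i. \<bar>(H *v v)$i\<bar> / l \<le> (H *v e)$i)"
      by (simp add: interval_H[OF HK] matrix_vector_mult_scaleR abs_mult) (use l in \<open>simp add: divide_inverse mult.commute\<close>)
    also have "\<dots> \<longleftrightarrow> (\<forall>i. \<bar>(H *v v)$i\<bar> \<le> l * (H *v e)$i)"
      using l by (simp add: divide_le_eq mult.commute)
    also have "\<dots> \<longleftrightarrow> G \<le> l"
    proof
      assume a: "\<forall>i. \<bar>(H *v v)$i\<bar> \<le> l * (H *v e)$i"
      show "G \<le> l" unfolding G_def
      proof (rule Max.boundedI)
        fix t assume "t \<in> range (\<lambda>i. \<bar>(H *v v)$i\<bar> / (H *v e)$i)"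
        then obtain i where t: "t = \<bar>(H *v v)$i\<bar> / (H *v e)$i" by auto
        show "t \<le> l"
        proof (cases "(H *v e)$i = 0")
          case True thus ?thesis using t l by simp
        next
          case False hence "0 < (H *v e)$i" using nn by (metis order_le_less)
          thus ?thesis using t a by (simp add: divide_le_eq mult.commute)
        qed
      qed auto
    next
      assume Gl: "G \<le> l"
      show "\<forall>i. \<bar>(H *v v)$i\<bar> \<le> l * (H *v e)$i"
      proof
        fix i
        have "\<bar>(H *v v)$i\<bar> \<le> G * (H *v e)$i" unfolding G_def by (rule max_ratio_bound[OF nn zr])
        also have "\<dots> \<le> l * (H *v e)$i" using Gl nn by (simp add: mult_right_mono)
        finally show "\<bar>(H *v v)$i\<bar> \<le> l * (H *v e)$i" .
      qed
    qed
    finally show ?thesis .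
  qed
  have S0: "0 \<in> S \<Longrightarrow> G = 0"
  proof -
    assume "0 \<in> S"
    hence "v = 0" unfolding S_def by auto
    thus "G = 0" unfolding G_def by simp
  qed
  have Sge: "x \<in> S \<Longrightarrow> G \<le> x" for x
    using key[of x] S0 G0 unfolding S_def by (cases "x = 0") auto
  have "Inf S = G"
  proof (cases "G = 0")
    case False
    hence "0 < G" using G0 by simp
    thus ?thesis using key[of G] Sge by (intro cInf_eq_minimum) auto
  next
    case True
    have ne: "1 \<in> S" using key[of 1] True by simp
    have bdd: "bdd_below S" using Sge by (auto simp: bdd_below_def)
    have "G \<le> Inf S" using ne Sge by (intro cInf_greatest) auto
    moreover have "Inf S \<le> G"
    proof (rule ccontr)
      assume "\<not> Inf S \<le> G"
      hence p: "0 < Inf S" using True by simp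
      hence "Inf S / 2 \<in> S" using key[of "Inf S / 2"] True by simp
      hence "Inf S \<le> Inf S / 2" using bdd by (intro cInf_lower)
      thus False using p by simp
    qed
    ultimately show ?thesis by simp
  qed
  thus ?thesis unfolding gauge_def S_def G_def by simp
qed

lemma gauge_zero_iff:
  fixes H :: "real^'n^'m"
  assumes HK: "K = {x. \<forall>i. 0 \<le> (H *v x) $ i}" and e: "e \<in> interior K"
  shows "gauge K e v = 0 \<longleftrightarrow> H *v v = 0"
proof -
  have nn: "\<forall>i. 0 \<le> (H *v e)$i" using He_props[OF HK e] by blast
  have zr: "\<forall>i. (H *v e)$i = 0 \<longrightarrow> (H *v v)$i = 0" using He_props[OF HK e] row_zero_comp by blast
  show ?thesis
  proof
    assume g: "gauge K e v = 0"
    have "\<bar>(H *v v)$i\<bar> \<le> 0" for i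
      using max_ratio_bound[OF nn zr, of i] g gauge_formula[OF HK e, of v] by simp
    thus "H *v v = 0" by (simp add: vec_eq_iff)
  next
    assume "H *v v = 0"
    thus "gauge K e v = 0" using gauge_formula[OF HK e, of v] by simp
  qed
qed



lemma induced_part1:
  fixes H :: "real^'n^'m" and P :: "real^'n^'n"
  assumes HK: "K = {x. \<forall>i. 0 \<le> (H *v x) $ i}" and e: "e \<in> interior K"
    and R: "\<exists>i. 0 < (H *v e)$i" and PK: "\<forall>x\<in>K. P *v x \<in> K"
    and Pker: "\<forall>y. H *v y = 0 \<longrightarrow> H *v (P *v y) = 0"
  shows "induced_seminorm (gauge K e) P = ereal (MAX i. \<bar>(H *v (P *v e))$i\<bar> / (H *v e)$i)"
proof -
  define G where "G = (\<lambda>v. MAX i. \<bar>(H *v v)$i\<bar> / (H *v e)$i)"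
  have gG: "gauge K e v = G v" for v unfolding G_def by (rule gauge_formula[OF HK e])
  have nn: "\<forall>i. 0 \<le> (H *v e)$i" using He_props[OF HK e] by blast
  have zr: "\<forall>i. (H *v e)$i = 0 \<longrightarrow> (H *v v)$i = 0" for v using He_props[OF HK e] row_zero_comp by blast
  have ker: "seminorm_kernel (gauge K e) = {x. H *v x = 0}"
    unfolding seminorm_kernel_def using gauge_zero_iff[OF HK e] by auto
  define T where "T = {ereal (gauge K e (P *v x)) | x. gauge K e x = 1 \<and> (\<forall>k\<in>seminorm_kernel (gauge K e). x \<bullet> k = 0)}"
  have eK: "e \<in> K" using e interior_subset by blast
  have PeK: "P *v e \<in> K" using PK eK by blast
  have upper: "t \<le> ereal (G (P *v e))" if "t \<in> T" for t
  proof -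
    obtain x where t: "t = ereal (G (P *v x))" and x1: "G x = 1" using \<open>t \<in> T\<close> unfolding T_def gG by auto
    have bx: "\<bar>(H *v x)$i\<bar> \<le> (H *v e)$i" for i
      using max_ratio_bound[OF nn zr[of x], of i] x1 unfolding G_def by simp
    have b2: "0 \<le> (H *v e)$i - (H *v x)$i" "0 \<le> (H *v e)$i + (H *v x)$i" for i
      using bx[of i] by (auto simp: abs_le_iff)
    have "e - x \<in> K" "e + x \<in> K" using HK b2
      by (auto simp: mv_diff matrix_vector_right_distrib)
    hence "P *v (e - x) \<in> K" "P *v (e + x) \<in> K" using PK by auto
    hence c1: "0 \<le> (H *v (P *v e))$i - (H *v (P *v x))$i" "0 \<le> (H *v (P *v e))$i + (H *v (P *v x))$i" for i
      using HK by (auto simp: mv_diff matrix_vector_right_distrib)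
    have b: "\<bar>(H *v (P *v x))$i\<bar> \<le> (H *v (P *v e))$i" for i
      using c1[of i] by (auto simp: abs_le_iff)
    have "G (P *v x) \<le> G (P *v e)" unfolding G_def
    proof (rule Max.boundedI)
      fix s assume "s \<in> range (\<lambda>i. \<bar>(H *v (P *v x))$i\<bar> / (H *v e)$i)"
      then obtain i where s: "s = \<bar>(H *v (P *v x))$i\<bar> / (H *v e)$i" by auto
      have "s \<le> \<bar>(H *v (P *v e))$i\<bar> / (H *v e)$i"
        unfolding s using b[of i] nn by (intro divide_right_mono) auto
      also have "\<dots> \<le> (MAX i. \<bar>(H *v (P *v e))$i\<bar> / (H *v e)$i)" by (rule Max_ge) auto
      finally show "s \<le> (MAX i. \<bar>(H *v (P *v e))$i\<bar> / (H *v e)$i)" .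
    qed auto
    thus ?thesis using t by simp
  qed
  have sub: "subspace {x. H *v x = (0::real^'m)}"
    by (auto simp: subspace_def matrix_vector_right_distrib matrix_vector_mult_scaleR)
  obtain y z where y: "y \<in> span {x. H *v x = 0}" and z: "\<And>w. w \<in> span {x. H *v x = 0} \<Longrightarrow> orthogonal z w"
    and ez: "e = y + z"
    using orthogonal_subspace_decomp_exists[of "{x. H *v x = 0}" e] by blast
  have spanK: "span {x. H *v x = 0} = {x. H *v x = (0::real^'m)}" using sub by (rule span_eq_iff[THEN iffD2])
  have Hy: "H *v y = 0" using y spanK by auto
  have Hz: "H *v z = H *v e" using ez Hy by (simp add: matrix_vector_right_distrib)
  have HPz: "H *v (P *v z) = H *v (P *v e)"
    using ez Pker Hy by (simp add: matrix_vector_right_distrib)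
  have Ge: "G e = 1" unfolding G_def
  proof (rule Max_eqI)
    fix s assume "s \<in> range (\<lambda>i. \<bar>(H *v e)$i\<bar> / (H *v e)$i)"
    then obtain i where "s = \<bar>(H *v e)$i\<bar> / (H *v e)$i" by auto
    thus "s \<le> 1" using nn by (cases "(H *v e)$i = 0") auto
  next
    obtain i where "0 < (H *v e)$i" using R by blast
    thus "1 \<in> range (\<lambda>i. \<bar>(H *v e)$i\<bar> / (H *v e)$i)" by (intro range_eqI[of _ _ i]) simp
  qed auto
  have z1: "gauge K e z = 1" using Ge Hz unfolding gG G_def by simp
  have z2: "\<forall>k\<in>seminorm_kernel (gauge K e). z \<bullet> k = 0"
      using z spanK ker by (auto simp: orthogonal_def)
  have "ereal (gauge K e (P *v z)) \<in> T"
    unfolding T_def using z1 z2 by blast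
  hence "ereal (G (P *v z)) \<in> T" by (simp add: gG)
  moreover have "G (P *v z) = G (P *v e)" unfolding G_def using HPz by simp
  ultimately have lower: "ereal (G (P *v e)) \<in> T" by simp
  have "Sup T = ereal (G (P *v e))"
    by (rule order.antisym) (use upper lower in \<open>auto intro: Sup_least Sup_upper\<close>)
  thus ?thesis unfolding induced_seminorm_def T_def G_def by simp
qed

lemma part1:
  fixes K :: "(real^'n) set" and H :: "real^'n^'m" and V :: "real^'k^'n"
    and e :: "real^'n" and A :: "real^'n^'n" and c :: real
  assumes HK: "K = {x. \<forall>i. 0 \<le> (H *v x) $ i}"
    and VK: "K = {V *v y | y. \<forall>j. 0 \<le> y $ j}"
    and e: "e \<in> interior K"
    and M: "K_Metzler K A"
  shows "(semi_measure (gauge K e) A \<le> ereal c \<longleftrightarrow> cone_le K (A *v e) (c *\<^sub>R e))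
       \<and> (cone_le K (A *v e) (c *\<^sub>R e) \<longleftrightarrow> (\<forall>i. (H *v (A *v e)) $ i \<le> c * (H *v e) $ i))"
proof -
  have nn: "\<forall>i. 0 \<le> (H *v e)$i" using He_props[OF HK e] by blast
  have zr: "\<forall>i. (H *v e)$i = 0 \<longrightarrow> (H *v v)$i = 0" for v using He_props[OF HK e] row_zero_comp by blast
  have cl: "cone_le K (A *v e) (c *\<^sub>R e) \<longleftrightarrow> (\<forall>i. (H *v (A *v e)) $ i \<le> c * (H *v e) $ i)"
    using HK by (simp add: cone_le_def mv_diff matrix_vector_mult_scaleR)
  have ntriv: "\<not> trivial_limit (at_right (0::real))" by simp
  show ?thesis
  proof (cases "\<exists>i. 0 < (H *v e)$i")
    case R: True
    define m where "m = Max ((\<lambda>i. (H *v (A *v e))$i / (H *v e)$i) ` {i. 0 < (H *v e)$i})"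
    note RE = ratio_eventually[OF nn zr R, of "A *v e", folded m_def]
    have "eventually (\<lambda>h. (induced_seminorm (gauge K e) (mat 1 + h *\<^sub>R A) - 1) / ereal h = ereal m) (at_right 0)"
      using RE(1) pos_eventually[OF HK VK M] eventually_at_right_less[of 0]
    proof (eventually_elim)
      case (elim h)
      have Pker: "\<forall>y. H *v y = 0 \<longrightarrow> H *v ((mat 1 + h *\<^sub>R A) *v y) = 0"
        using metz_ker[OF HK M] by (simp add: P_apply matrix_vector_right_distrib matrix_vector_mult_scaleR)
      have "induced_seminorm (gauge K e) (mat 1 + h *\<^sub>R A) = ereal (1 + h * m)"
        using induced_part1[OF HK e R _ Pker] elim by (simp add: P_apply)
      moreover have "ereal (1 + h * m) - 1 = ereal (h * m)" by (simp add: one_ereal_def)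
      ultimately show ?case using elim by simp
    qed
    hence "semi_measure (gauge K e) A = ereal m"
      unfolding semi_measure_def by (intro tendsto_Lim ntriv tendsto_eventually)
    thus ?thesis using RE(2)[of c] cl by simp
  next
    case False
    have H0: "H$i = 0" for i
    proof -
      have "\<not> 0 < (H*v e)$i" using False by blast
      moreover have "0 \<le> (H*v e)$i" using nn by blast
      ultimately have "(H*v e)$i = 0" by linarith
      thus ?thesis using He_props(2)[OF HK e] by blast
    qed
    have g0: "gauge K e v = 0" for v using gauge_zero_iff[OF HK e, of v] H0 row_zero_comp[of H]
      by (simp add: vec_eq_iff)
    have indinf: "induced_seminorm (gauge K e) P = - \<infinity>" for P
      unfolding induced_seminorm_def g0 by (simp add: bot_ereal_def)
    have "eventually (\<lambda>h. (induced_seminorm (gauge K e) (mat 1 + h *\<^sub>R A) - 1) / ereal h = - \<infinity>) (at_right 0)"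
      using eventually_at_right_less[of 0]
    proof (rule eventually_mono)
      fix h :: real assume h: "0 < h"
      have "- \<infinity> - (1::ereal) = - \<infinity>" by (simp add: one_ereal_def)
      thus "(induced_seminorm (gauge K e) (mat 1 + h *\<^sub>R A) - 1) / ereal h = - \<infinity>"
        using indinf h by (simp add: divide_ereal_def)
    qed
    hence "semi_measure (gauge K e) A = - \<infinity>"
      unfolding semi_measure_def by (intro tendsto_Lim ntriv tendsto_eventually)
    moreover have "\<forall>i. (H *v (A *v e)) $ i \<le> c * (H *v e) $ i" using H0 row_zero_comp[of H] by (simp add: matrix_vector_mul_component)
    ultimately show ?thesis using cl by simp
  qed
qed



lemma tV_comp': "(\<phi> v* V)$j = \<phi> \<bullet> (V *v axis j (1::real))"
  for V :: "real^'k^'n"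
proof -
  have "(\<phi> v* V)$j = (\<phi> v* V) \<bullet> axis j 1" by (rule cart_eq_inner_axis)
  also have "\<dots> = \<phi> \<bullet> (V *v axis j 1)" by (rule dot_lmul_matrix)
  finally show ?thesis .
qed

lemma tV_comp: "(transpose V *v \<phi>)$j = \<phi> \<bullet> (V *v axis j (1::real))"
  for V :: "real^'k^'n"
  using tV_comp'[of \<phi> V j] by simp

lemma dual_V:
  fixes V :: "real^'k^'n"
  assumes VK: "K = {V *v y | y. \<forall>j. 0 \<le> y $ j}"
  shows "\<phi> \<in> dual_cone K \<longleftrightarrow> (\<forall>j. 0 \<le> (transpose V *v \<phi>)$j)"
proof
  assume "\<phi> \<in> dual_cone K"
  thus "\<forall>j. 0 \<le> (transpose V *v \<phi>)$j"
    using col_in_K[OF VK] by (auto simp: dual_cone_def tV_comp tV_comp')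
next
  assume a: "\<forall>j. 0 \<le> (transpose V *v \<phi>)$j"
  show "\<phi> \<in> dual_cone K" unfolding dual_cone_def mem_Collect_eq
  proof
    fix x assume "x \<in> K"
    then obtain y where x: "x = V *v y" and y: "\<forall>j. 0 \<le> y $ j" using VK by auto
    have "\<phi> \<bullet> x = (transpose V *v \<phi>) \<bullet> y" by (simp add: x dot_lmul_matrix)
    also have "\<dots> = (\<Sum>j\<in>UNIV. (transpose V *v \<phi>)$j * y$j)" by (simp only: inner_vec_def inner_real_def)
    finally have eq: "\<phi> \<bullet> x = (\<Sum>j\<in>UNIV. (transpose V *v \<phi>)$j * y$j)" .
    have ge: "0 \<le> (\<Sum>j\<in>UNIV. (transpose V *v \<phi>)$j * y$j)" using a y by (intro sum_nonneg) auto
    show "0 \<le> \<phi> \<bullet> x" unfolding eq by (rule ge)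
  qed
qed

lemma dual_add: "a \<in> dual_cone K \<Longrightarrow> b \<in> dual_cone K \<Longrightarrow> a + b \<in> dual_cone K"
  by (auto simp: dual_cone_def inner_add_left)

lemma dual_scale: "a \<in> dual_cone K \<Longrightarrow> 0 \<le> t \<Longrightarrow> t *\<^sub>R a \<in> dual_cone K"
  by (auto simp: dual_cone_def)

lemma I_iff: "\<eta> \<in> cone_interval Ks (-es) es \<longleftrightarrow> es + \<eta> \<in> Ks \<and> es - \<eta> \<in> Ks"
  by (simp add: cone_interval_def cone_le_def add.commute)

lemma I_bound:
  assumes "\<eta> \<in> cone_interval (dual_cone K) (-es) es" "x \<in> K"
  shows "\<bar>\<eta> \<bullet> x\<bar> \<le> es \<bullet> x"
proof -
  have "0 \<le> (es + \<eta>) \<bullet> x" "0 \<le> (es - \<eta>) \<bullet> x" using assms by (auto simp: I_iff dual_cone_def)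
  thus ?thesis by (simp add: inner_add_left inner_diff_left abs_le_iff)
qed

lemma I_bdd:
  fixes e es :: "real^'n"
  assumes e: "e \<in> interior K"
  shows "bdd_above {\<bar>\<eta> \<bullet> v\<bar> | \<eta>. \<eta> \<in> cone_interval (dual_cone K) (-es) es}"
proof -
  obtain \<delta> where d: "\<delta> > 0" "ball e \<delta> \<subseteq> K" using e by (meson mem_interior)
  define s where "s = \<delta> / (2 * (norm v + 1))"
  have pos: "0 < 2 * (norm v + 1)" by (smt (verit) norm_ge_zero)
  hence s: "0 < s" using d unfolding s_def by (intro divide_pos_pos)
  have "s * norm v < \<delta>"
  proof -
    have "s * norm v \<le> s * (norm v + 1)" using s by simp
    also have "\<dots> = \<delta>/2" unfolding s_def using pos by (simp add: field_simps)
    finally show ?thesis using d by simp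
  qed
  hence "e + s *\<^sub>R v \<in> K" "e - s *\<^sub>R v \<in> K" using d s by (auto simp: dist_norm)
  hence b: "\<bar>\<eta> \<bullet> v\<bar> \<le> (es \<bullet> e) / s" if "\<eta> \<in> cone_interval (dual_cone K) (-es) es" for \<eta>
  proof -
    assume K2: "e + s *\<^sub>R v \<in> K" "e - s *\<^sub>R v \<in> K"
    have a1: "\<bar>\<eta> \<bullet> e + s * (\<eta> \<bullet> v)\<bar> \<le> es \<bullet> e + s * (es \<bullet> v)"
      using I_bound[OF that K2(1)] by (simp add: inner_add_right)
    have a2: "\<bar>\<eta> \<bullet> e - s * (\<eta> \<bullet> v)\<bar> \<le> es \<bullet> e - s * (es \<bullet> v)"
      using I_bound[OF that K2(2)] by (simp add: inner_diff_right)
    have "s * \<bar>\<eta> \<bullet> v\<bar> \<le> es \<bullet> e" using a1 a2 s by (simp add: abs_le_iff abs_mult) linarith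
    thus ?thesis using s by (simp add: le_divide_eq mult.commute)
  qed
  show ?thesis unfolding bdd_above_def using b by blast
qed



lemma I_mem0: "es \<in> dual_cone K \<Longrightarrow> 0 \<in> cone_interval (dual_cone K) (-es) es"
  by (simp add: I_iff)

lemma I_mem_es: "es \<in> dual_cone K \<Longrightarrow> es \<in> cone_interval (dual_cone K) (-es) es"
proof -
  assume es: "es \<in> dual_cone K"
  have a: "es + es \<in> dual_cone K" using es es by (rule dual_add)
  have b: "es - es \<in> dual_cone K" by (simp add: dual_cone_def)
  show ?thesis unfolding I_iff using a b by blast
qed

lemma DG_upper:
  fixes e es :: "real^'n"
  assumes e: "e \<in> interior K" and "\<eta> \<in> cone_interval (dual_cone K) (-es) es"
  shows "\<bar>\<eta> \<bullet> v\<bar> \<le> dual_gauge (dual_cone K) es v"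
  unfolding dual_gauge_def using assms(2) by (intro cSup_upper I_bdd[OF e]) auto

lemma DG_le:
  fixes e es :: "real^'n"
  assumes es: "es \<in> dual_cone K" and b: "\<forall>\<eta>\<in>cone_interval (dual_cone K) (-es) es. \<bar>\<eta> \<bullet> v\<bar> \<le> B"
  shows "dual_gauge (dual_cone K) es v \<le> B"
  unfolding dual_gauge_def using I_mem0[OF es] b by (intro cSup_least) auto

lemma DG_K:
  fixes e es :: "real^'n"
  assumes e: "e \<in> interior K" and es: "es \<in> dual_cone K" and x: "x \<in> K"
  shows "dual_gauge (dual_cone K) es x = es \<bullet> x"
proof (rule order.antisym)
  show "dual_gauge (dual_cone K) es x \<le> es \<bullet> x"
    using I_bound x by (intro DG_le[OF es]) auto
  have "es \<bullet> x \<le> \<bar>es \<bullet> x\<bar>" by simp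
  also have "\<dots> \<le> dual_gauge (dual_cone K) es x" by (rule DG_upper[OF e I_mem_es[OF es]])
  finally show "es \<bullet> x \<le> dual_gauge (dual_cone K) es x" .
qed

lemma DG_zero:
  fixes e es :: "real^'n"
  assumes e: "e \<in> interior K" and es: "es \<in> interior (dual_cone K)"
    and k: "dual_gauge (dual_cone K) es k = 0"
  shows "k = 0"
proof (rule ccontr)
  assume nz: "k \<noteq> 0"
  obtain \<epsilon> where d: "\<epsilon> > 0" "ball es \<epsilon> \<subseteq> dual_cone K" using es by (meson mem_interior)
  define \<eta> where "\<eta> = ((\<epsilon>/2) / norm k) *\<^sub>R k"
  have n\<eta>: "norm \<eta> = \<epsilon>/2" using nz d by (simp add: \<eta>_def)
  have "es + \<eta> \<in> ball es \<epsilon>" "es - \<eta> \<in> ball es \<epsilon>" using n\<eta> d by (auto simp: dist_norm)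
  hence "\<eta> \<in> cone_interval (dual_cone K) (-es) es" using d by (auto simp: I_iff)
  hence "\<bar>\<eta> \<bullet> k\<bar> \<le> 0" using DG_upper[OF e] k by metis
  moreover have "\<eta> \<bullet> k = (\<epsilon>/2) * norm k"
    using nz by (simp add: \<eta>_def power2_norm_eq_inner[symmetric] power2_eq_square)
  moreover have "(\<epsilon>/2) * norm k > 0" using nz d by simp
  ultimately show False by simp
qed



lemma induced_part2:
  fixes V :: "real^'k^'n" and P Pt :: "real^'n^'n"
  assumes VK: "K = {V *v y | y. \<forall>j. 0 \<le> y $ j}"
    and e: "e \<in> interior K" and es: "es \<in> interior (dual_cone K)"
    and PK: "\<forall>x\<in>K. P *v x \<in> K"
    and Ptin: "\<forall>\<eta> x. (Pt *v \<eta>) \<bullet> x = \<eta> \<bullet> (P *v x)"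
    and lam: "lam = (MAX j. \<bar>(transpose V *v (Pt *v es))$j\<bar> / (transpose V *v es)$j)"
    and lpos: "0 < lam"
    and j0: "0 < (transpose V *v es)$j0" "(transpose V *v (Pt *v es))$j0 / (transpose V *v es)$j0 = lam"
  shows "induced_seminorm (dual_gauge (dual_cone K) es) P = ereal lam"
proof -
  let ?Ks = "dual_cone K"
  let ?DG = "dual_gauge (dual_cone K) es"
  let ?I = "cone_interval (dual_cone K) (-es) es"
  let ?v = "\<lambda>j. V *v axis j (1::real)"
  have esK: "es \<in> ?Ks" using es interior_subset by blast
  have nnT: "\<forall>j. 0 \<le> (transpose V *v es)$j" using dual_V[OF VK] esK by blast
  have vj0: "?v j = 0" if "(transpose V *v es)$j = 0" for j
  proof (rule interior_orth_zero[OF es])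
    show "\<forall>x\<in>?Ks. 0 \<le> ?v j \<bullet> x" using col_in_K[OF VK] by (auto simp: dual_cone_def inner_commute)
    show "?v j \<bullet> es = 0" using that by (simp add: tV_comp tV_comp' inner_commute)
  qed
  have zrT: "\<forall>j. (transpose V *v es)$j = 0 \<longrightarrow> (transpose V *v z)$j = 0" for z
    using vj0 by (simp add: tV_comp tV_comp') (metis inner_zero_right)
  have PtKs: "Pt *v \<phi> \<in> ?Ks" if "\<phi> \<in> ?Ks" for \<phi>
    using that PK Ptin by (auto simp: dual_cone_def)
  have D: "lam *\<^sub>R es - Pt *v es \<in> ?Ks"
    unfolding dual_V[OF VK]
  proof
    fix j
    have "\<bar>(transpose V *v (Pt *v es))$j\<bar> \<le> lam * (transpose V *v es)$j"
      unfolding lam by (rule max_ratio_bound[OF nnT zrT])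
    thus "0 \<le> (transpose V *v (lam *\<^sub>R es - Pt *v es))$j"
      by (simp add: mv_diff matrix_vector_mult_scaleR)
  qed
  define T where "T = {ereal (?DG (P *v x)) | x. ?DG x = 1 \<and> (\<forall>k\<in>seminorm_kernel ?DG. x \<bullet> k = 0)}"
  have upper: "t \<le> ereal lam" if tT: "t \<in> T" for t
  proof -
    obtain x where t: "t = ereal (?DG (P *v x))" and x1: "?DG x = 1" using tT unfolding T_def by auto
    have "?DG (P *v x) \<le> lam"
    proof (rule DG_le[OF esK], rule ballI)
      fix \<eta> assume "\<eta> \<in> ?I"
      hence ep: "es + \<eta> \<in> ?Ks" "es - \<eta> \<in> ?Ks" by (auto simp: I_iff)
      have a1: "lam *\<^sub>R es + Pt *v \<eta> \<in> ?Ks"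
      proof -
        have "(lam *\<^sub>R es - Pt *v es) + Pt *v (es + \<eta>) \<in> ?Ks" by (rule dual_add[OF D PtKs[OF ep(1)]])
        thus ?thesis by (simp add: matrix_vector_right_distrib)
      qed
      have a2: "lam *\<^sub>R es - Pt *v \<eta> \<in> ?Ks"
      proof -
        have "(lam *\<^sub>R es - Pt *v es) + Pt *v (es - \<eta>) \<in> ?Ks" by (rule dual_add[OF D PtKs[OF ep(2)]])
        thus ?thesis by (simp add: mv_diff)
      qed
      define \<eta>' where "\<eta>' = (1/lam) *\<^sub>R (Pt *v \<eta>)"
      have "es + \<eta>' = (1/lam) *\<^sub>R (lam *\<^sub>R es + Pt *v \<eta>)" "es - \<eta>' = (1/lam) *\<^sub>R (lam *\<^sub>R es - Pt *v \<eta>)"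
        using lpos by (simp_all add: \<eta>'_def algebra_simps)
      hence "es + \<eta>' \<in> ?Ks" "es - \<eta>' \<in> ?Ks" using a1 a2 lpos by (auto intro!: dual_scale)
      hence "\<eta>' \<in> ?I" by (simp add: I_iff)
      hence b: "\<bar>\<eta>' \<bullet> x\<bar> \<le> 1" using DG_upper[OF e] x1 by metis
      have "\<eta> \<bullet> (P *v x) = lam * (\<eta>' \<bullet> x)" using lpos Ptin by (simp add: \<eta>'_def)
      hence "\<bar>\<eta> \<bullet> (P *v x)\<bar> = lam * \<bar>\<eta>' \<bullet> x\<bar>" using lpos by (simp add: abs_mult)
      also have "\<dots> \<le> lam * 1" using b lpos by (intro mult_left_mono) auto
      finally show "\<bar>\<eta> \<bullet> (P *v x)\<bar> \<le> lam" by simp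
    qed
    thus ?thesis using t by simp
  qed
  define q where "q = (transpose V *v es)$j0"
  have q: "0 < q" "q = es \<bullet> ?v j0" using j0 by (simp_all add: q_def tV_comp tV_comp')
  define x0 where "x0 = (1/q) *\<^sub>R ?v j0"
  have x0K: "x0 \<in> K"
  proof -
    have "x0 = V *v ((1/q) *\<^sub>R axis j0 1)" by (simp add: x0_def matrix_vector_mult_scaleR)
    moreover have "\<forall>j. 0 \<le> ((1/q) *\<^sub>R axis j0 (1::real)) $ j" using q by (simp add: axis_def)
    ultimately show ?thesis using VK by blast
  qed
  have DGx0: "?DG x0 = 1" using DG_K[OF e esK x0K] q by (simp add: x0_def)
  have kx0: "\<forall>k\<in>seminorm_kernel ?DG. x0 \<bullet> k = 0"
    using DG_zero[OF e es] by (auto simp: seminorm_kernel_def) (metis inner_zero_right)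
  have inT: "ereal (?DG (P *v x0)) \<in> T" unfolding T_def using DGx0 kx0 by blast
  have "lam = es \<bullet> (P *v x0)"
  proof -
    have "es \<bullet> (P *v x0) = (Pt *v es) \<bullet> x0" using Ptin by simp
    also have "\<dots> = (1/q) * ((Pt *v es) \<bullet> ?v j0)" by (simp add: x0_def)
    also have "\<dots> = lam" using j0 by (simp add: q_def tV_comp tV_comp')
    finally show ?thesis by simp
  qed
  also have "\<dots> \<le> \<bar>es \<bullet> (P *v x0)\<bar>" by simp
  also have "\<dots> \<le> ?DG (P *v x0)" by (rule DG_upper[OF e I_mem_es[OF esK]])
  finally have "ereal lam \<le> ereal (?DG (P *v x0))" by simp
  hence lower: "ereal lam \<le> Sup T" using inT by (meson Sup_upper order_trans)
  have "Sup T \<le> ereal lam" using upper by (rule Sup_least)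
  hence "Sup T = ereal lam" using lower by (rule order.antisym)
  thus ?thesis unfolding induced_seminorm_def T_def by simp
qed



lemma part2:
  fixes K :: "(real^'n) set" and H :: "real^'n^'m" and V :: "real^'k^'n"
    and e :: "real^'n" and A :: "real^'n^'n" and c :: real
  assumes HK: "K = {x. \<forall>i. 0 \<le> (H *v x) $ i}"
    and VK: "K = {V *v y | y. \<forall>j. 0 \<le> y $ j}"
    and e: "e \<in> interior K"
    and M: "K_Metzler K A"
    and es: "es \<in> interior (dual_cone K)"
  shows "(semi_measure (dual_gauge (dual_cone K) es) A \<le> ereal c
                \<longleftrightarrow> cone_le (dual_cone K) (transpose A *v es) (c *\<^sub>R es))
           \<and> (cone_le (dual_cone K) (transpose A *v es) (c *\<^sub>R es)
                \<longleftrightarrow> (\<forall>j. (transpose V *v (transpose A *v es)) $ j \<le> c * (transpose V *v es) $ j))"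
proof -
  let ?Ks = "dual_cone K"
  let ?v = "\<lambda>j. V *v axis j (1::real)"
  let ?w = "transpose A *v es"
  have esK: "es \<in> ?Ks" using es interior_subset by blast
  have nnT: "\<forall>j. 0 \<le> (transpose V *v es)$j" using dual_V[OF VK] esK by blast
  have vj0: "?v j = 0" if "(transpose V *v es)$j = 0" for j
  proof (rule interior_orth_zero[OF es])
    show "\<forall>x\<in>?Ks. 0 \<le> ?v j \<bullet> x" using col_in_K[OF VK] by (auto simp: dual_cone_def inner_commute)
    show "?v j \<bullet> es = 0" using that by (simp add: tV_comp tV_comp' inner_commute)
  qed
  have zrT: "\<forall>j. (transpose V *v es)$j = 0 \<longrightarrow> (transpose V *v z)$j = 0" for z
    using vj0 by (simp add: tV_comp tV_comp') (metis inner_zero_right)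
  have R: "\<exists>j. 0 < (transpose V *v es)$j"
  proof (rule ccontr)
    assume "\<not> ?thesis"
    hence nz: "\<not> 0 < (transpose V *v es)$j" for j by blast
    have "(transpose V *v es)$j = 0" for j using nz[of j] nnT[rule_format, of j] by linarith
    hence "?v j = 0" for j using vj0 by blast
    hence "V$i$j = 0" for i j using matrix_vector_mult_basis[of V j]
      by (metis column_def vec_lambda_beta zero_index)
    hence V0: "V = 0" by (simp add: vec_eq_iff)
    hence "K = {0}" using VK by (auto intro!: exI[of _ 0])
    thus False using e by simp
  qed
  define m where "m = Max ((\<lambda>j. (transpose V *v ?w)$j / (transpose V *v es)$j) ` {j. 0 < (transpose V *v es)$j})"
  note RE = ratio_eventually[OF nnT zrT R, of ?w, folded m_def]
  obtain j0 where j0: "0 < (transpose V *v es)$j0" "(transpose V *v ?w)$j0 / (transpose V *v es)$j0 = m"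
    using RE(3) by blast
  have cl: "cone_le ?Ks ?w (c *\<^sub>R es) \<longleftrightarrow> (\<forall>j. (transpose V *v ?w) $ j \<le> c * (transpose V *v es) $ j)"
    unfolding cone_le_def dual_V[OF VK] by (simp add: mv_diff matrix_vector_mult_scaleR)
  have ntriv: "\<not> trivial_limit (at_right (0::real))" by simp
  have "((\<lambda>h. 1 + h * m) \<longlongrightarrow> 1 + 0 * m) (at_right 0)" by (intro tendsto_intros)
  hence lp: "eventually (\<lambda>h. 0 < 1 + h * m) (at_right 0)" by (intro order_tendstoD(1)) auto
  have "eventually (\<lambda>h. (induced_seminorm (dual_gauge ?Ks es) (mat 1 + h *\<^sub>R A) - 1) / ereal h = ereal m) (at_right 0)"
    using RE(1) pos_eventually[OF HK VK M] eventually_at_right_less[of 0] lp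
  proof (eventually_elim)
    case (elim h)
    have Pes: "(mat 1 + h *\<^sub>R transpose A) *v es = es + h *\<^sub>R ?w" by (rule P_apply)
    have j0': "(transpose V *v ((mat 1 + h *\<^sub>R transpose A) *v es))$j0 / (transpose V *v es)$j0 = 1 + h * m"
    proof -
      have "(transpose V *v ((mat 1 + h *\<^sub>R transpose A) *v es))$j0 = (transpose V *v es)$j0 + h * (transpose V *v ?w)$j0"
        unfolding Pes by (simp add: matrix_vector_right_distrib matrix_vector_mult_scaleR)
      thus ?thesis using j0 by (simp add: field_simps)
    qed
    have "induced_seminorm (dual_gauge ?Ks es) (mat 1 + h *\<^sub>R A) = ereal (1 + h * m)"
    proof (rule induced_part2[OF VK e es])
      show "\<forall>x\<in>K. (mat 1 + h *\<^sub>R A) *v x \<in> K" using elim by blast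
      show "\<forall>\<eta> x. ((mat 1 + h *\<^sub>R transpose A) *v \<eta>) \<bullet> x = \<eta> \<bullet> ((mat 1 + h *\<^sub>R A) *v x)"
        by (simp only: PT_inner) simp
      show "1 + h * m = (MAX j. \<bar>(transpose V *v ((mat 1 + h *\<^sub>R transpose A) *v es))$j\<bar> / (transpose V *v es)$j)"
        using elim Pes by simp
      show "0 < 1 + h * m" using elim by simp
      show "0 < (transpose V *v es)$j0" by (rule j0(1))
      show "(transpose V *v ((mat 1 + h *\<^sub>R transpose A) *v es))$j0 / (transpose V *v es)$j0 = 1 + h * m"
        by (rule j0')
    qed
    moreover have "ereal (1 + h * m) - 1 = ereal (h * m)" by (simp add: one_ereal_def)
    ultimately show ?case using elim by simp
  qed
  hence "semi_measure (dual_gauge ?Ks es) A = ereal m"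
    unfolding semi_measure_def by (intro tendsto_Lim ntriv tendsto_eventually)
  thus ?thesis using RE(2)[of c] cl by simp
qed


theorem theorem1:
  fixes K :: "(real^'n) set" and H :: "real^'n^'m" and V :: "real^'k^'n"
    and e :: "real^'n" and A :: "real^'n^'n" and c :: real
  assumes H_rep: "K = {x. \<forall>i. 0 \<le> (H *v x) $ i}"
    and V_rep: "K = {V *v y | y. \<forall>j. 0 \<le> y $ j}"
    and proper: "interior K \<noteq> {}"
    and e_int: "e \<in> interior K"
    and metzler: "K_Metzler K A"
  shows "(semi_measure (gauge K e) A \<le> ereal c \<longleftrightarrow> cone_le K (A *v e) (c *\<^sub>R e))
       \<and> (cone_le K (A *v e) (c *\<^sub>R e) \<longleftrightarrow> (\<forall>i. (H *v (A *v e)) $ i \<le> c * (H *v e) $ i))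
       \<and> (\<forall>es. K \<inter> uminus ` K = {0} \<longrightarrow> es \<in> interior (dual_cone K) \<longrightarrow>
            ((semi_measure (dual_gauge (dual_cone K) es) A \<le> ereal c
                \<longleftrightarrow> cone_le (dual_cone K) (transpose A *v es) (c *\<^sub>R es))
           \<and> (cone_le (dual_cone K) (transpose A *v es) (c *\<^sub>R es)
                \<longleftrightarrow> (\<forall>j. (transpose V *v (transpose A *v es)) $ j \<le> c * (transpose V *v es) $ j))))"
  proof -
  have p1: "(semi_measure (gauge K e) A \<le> ereal c \<longleftrightarrow> cone_le K (A *v e) (c *\<^sub>R e))
       \<and> (cone_le K (A *v e) (c *\<^sub>R e) \<longleftrightarrow> (\<forall>i. (H *v (A *v e)) $ i \<le> c * (H *v e) $ i))"
    by (rule part1[OF H_rep V_rep e_int metzler])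
  show ?thesis using p1 part2[OF H_rep V_rep e_int metzler] by blast
qed

end
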